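(* Let $K^-$ be the graph obtained from the complete graph $K_4$ on vertices $v_1,v_2,v_3,v_4$ by deleting the edge $v_1v_2$. Let $c$ be any $(4,1)$-coloring of $K^-$, and let $D_c(K^-)$ be the associated digraph. All differences of colors below are taken in $\mathbb{Z}_4$. (a) If $c(v_1)=c(v_2)$, then $D_c(K^-)$ is acyclic and has no directed path between $v_1$ and $v_2$ (in either direction). (b) If $c(v_1)-c(v_2)=1$, then $D_c(K^-)$ is acyclic and has a directed path from $v_1$ to $v_2$. (c) If $c(v_1)-c(v_2)=2$, then $D_c(K^-)$ contains a directed cycle.
   Context: For positive integers $p,q$, a $(p,q)$-coloring of a graph $G$ is a map $c:V(G)\to\{0,1,\dots,p-1\}$ such that for every edge $xy\in E(G)$ one has $q\le |c(x)-c(y)|\le p-q$. A $(4,1)$-coloring is thus an ordinary proper coloring with colors $\{0,1,2,3\}$. For a $(p,q)$-coloring $c$ of $G$, $D_c(G)$ is the digraph with vertex set $V(G)$ which, for each edge $xy$ of $G$, contains the arc $(x,y)$ whenever $c(y)-c(x)\equiv q \pmod p$. *)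

theory Defs
  imports Main
begin

definition pq_coloring :: "nat \<Rightarrow> nat \<Rightarrow> 'a set \<Rightarrow> 'a set set \<Rightarrow> ('a \<Rightarrow> nat) \<Rightarrow> bool" where
  "pq_coloring p q V E c \<longleftrightarrow>
     (\<forall>v\<in>V. c v < p) \<and>
     (\<forall>x y. {x, y} \<in> E \<longrightarrow>
        int q \<le> \<bar>int (c x) - int (c y)\<bar> \<and> \<bar>int (c x) - int (c y)\<bar> \<le> int p - int q)"

definition Dc_arcs :: "nat \<Rightarrow> nat \<Rightarrow> 'a set set \<Rightarrow> ('a \<Rightarrow> nat) \<Rightarrow> ('a \<times> 'a) set" where
  "Dc_arcs p q E c = {(x, y). {x, y} \<in> E \<and> (int (c y) - int (c x)) mod int p = int q mod int p}"

definition Kminus_V :: "nat set" where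
  "Kminus_V = {1, 2, 3, 4}"

definition Kminus_E :: "nat set set" where
  "Kminus_E = {{i, j} | i j. i \<in> Kminus_V \<and> j \<in> Kminus_V \<and> i \<noteq> j} - {{1, 2}}"

end

theory Submission imports Defs begin

definition LL :: "(nat \<times> nat) list" where
 "LL = [(1,3),(3,1),(1,4),(4,1),(2,3),(3,2),(2,4),(4,2),(3,4),(4,3)]"

definition RR :: "(nat \<Rightarrow> nat) \<Rightarrow> (nat \<times> nat) set" where
 "RR c = set (filter (\<lambda>(x,y). (int (c y) - int (c x)) mod 4 = 1) LL)"

lemma E_char: "{x,y} \<in> Kminus_E \<longleftrightarrow> x \<in> {1,2,3,4} \<and> y \<in> {1,2,3,4} \<and> x \<noteq> y \<and> {x,y} \<noteq> {1::nat,2}"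
  unfolding Kminus_E_def Kminus_V_def by (auto simp: doubleton_eq_iff)

lemma E_char2: "{x,y} \<in> Kminus_E \<longleftrightarrow> (x,y) \<in> set LL"
  unfolding E_char LL_def by (auto simp: doubleton_eq_iff)

lemma Dc_RR: "Dc_arcs 4 1 Kminus_E c = RR c"
  unfolding Dc_arcs_def RR_def E_char2 by auto


lemma acyc_empty: "acyclic {}"
  by (simp add: acyclic_def)





lemma pa:
  fixes c :: "nat \<Rightarrow> nat"
  assumes "c 1 = 0" "c 2 = 0" "c 3 < 4" "c 4 < 4" "c 1 \<noteq> c 3" "c 1 \<noteq> c 4" "c 2 \<noteq> c 3" "c 2 \<noteq> c 4" "c 3 \<noteq> c 4"
  shows "acyclic (RR c) \<and> (1, 2) \<notin> (RR c)\<^sup>+ \<and> (2, 1) \<notin> (RR c)\<^sup>+"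
proof -
  have b: "\<And>v. c v < 4 \<Longrightarrow> c v = 0 \<or> c v = 1 \<or> c v = 2 \<or> c v = 3" by auto
  show ?thesis
    using assms(1,2) b[OF assms(3)] b[OF assms(4)] assms(5-9)
    unfolding RR_def LL_def
    apply (elim disjE)
    apply (simp_all only: simp_thms)
    apply (simp_all add: acyclic_insert rtrancl_insert trancl_insert acyc_empty)
    done
qed

lemma pb:
  fixes c :: "nat \<Rightarrow> nat"
  assumes "c 1 = 0" "c 2 = 3" "c 3 < 4" "c 4 < 4" "c 1 \<noteq> c 3" "c 1 \<noteq> c 4" "c 2 \<noteq> c 3" "c 2 \<noteq> c 4" "c 3 \<noteq> c 4"
  shows "acyclic (RR c) \<and> (1, 2) \<in> (RR c)\<^sup>+"
proof -
  have b: "\<And>v. c v < 4 \<Longrightarrow> c v = 0 \<or> c v = 1 \<or> c v = 2 \<or> c v = 3" by auto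
  show ?thesis
    using assms(1,2) b[OF assms(3)] b[OF assms(4)] assms(5-9)
    unfolding RR_def LL_def
    apply (elim disjE)
    apply (simp_all only: simp_thms)
    apply (simp_all add: acyclic_insert rtrancl_insert trancl_insert acyc_empty)
    done
qed

lemma pc:
  fixes c :: "nat \<Rightarrow> nat"
  assumes "c 1 = 0" "c 2 = 2" "c 3 < 4" "c 4 < 4" "c 1 \<noteq> c 3" "c 1 \<noteq> c 4" "c 2 \<noteq> c 3" "c 2 \<noteq> c 4" "c 3 \<noteq> c 4"
  shows "\<not> acyclic (RR c)"
proof -
  have b: "\<And>v. c v < 4 \<Longrightarrow> c v = 0 \<or> c v = 1 \<or> c v = 2 \<or> c v = 3" by auto
  show ?thesis
    using assms(1,2) b[OF assms(3)] b[OF assms(4)] assms(5-9)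
    unfolding RR_def LL_def
    apply (elim disjE)
    apply (simp_all only: simp_thms)
    apply (simp_all add: acyclic_insert rtrancl_insert trancl_insert acyc_empty)
    done
qed

lemma main0:
  fixes c :: "nat \<Rightarrow> nat"
  assumes "c 1 = 0" "c 2 < 4" "c 3 < 4" "c 4 < 4" "c 1 \<noteq> c 3" "c 1 \<noteq> c 4" "c 2 \<noteq> c 3" "c 2 \<noteq> c 4" "c 3 \<noteq> c 4"
  shows "(c 1 = c 2 \<longrightarrow>
            acyclic (RR c) \<and>
            (1, 2) \<notin> (RR c)\<^sup>+ \<and> (2, 1) \<notin> (RR c)\<^sup>+)
       \<and> ((int (c 1) - int (c 2)) mod 4 = 1 \<longrightarrow>
            acyclic (RR c) \<and> (1, 2) \<in> (RR c)\<^sup>+)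
       \<and> ((int (c 1) - int (c 2)) mod 4 = 2 \<longrightarrow>
            \<not> acyclic (RR c))"
proof (rule conjI[OF impI conjI[OF impI impI]])
  assume "c 1 = c 2"
  show "acyclic (RR c) \<and> (1, 2) \<notin> (RR c)\<^sup>+ \<and> (2, 1) \<notin> (RR c)\<^sup>+"
  proof -
    have "c 2 = 0" using \<open>c 1 = c 2\<close> assms(1) by simp
    then show ?thesis using pa[OF assms(1) _ assms(3-9)] by simp
  qed
next
  assume h: "(int (c 1) - int (c 2)) mod 4 = 1"
  have "c 2 = 3"
  proof -
    have "c 2 = 0 \<or> c 2 = 1 \<or> c 2 = 2 \<or> c 2 = 3" using assms(2) by auto
    then show ?thesis using h assms(1) by auto
  qed
  then show "acyclic (RR c) \<and> (1, 2) \<in> (RR c)\<^sup>+" using pb[OF assms(1) _ assms(3-9)] by simp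
next
  assume h: "(int (c 1) - int (c 2)) mod 4 = 2"
  have "c 2 = 2"
  proof -
    have "c 2 = 0 \<or> c 2 = 1 \<or> c 2 = 2 \<or> c 2 = 3" using assms(2) by auto
    then show ?thesis using h assms(1) by auto
  qed
  then show "\<not> acyclic (RR c)" using pc[OF assms(1) _ assms(3-9)] by simp
qed

lemma eq4: "(a::nat) < 4 \<Longrightarrow> b < 4 \<Longrightarrow> a = b \<longleftrightarrow> (int a - int b) mod 4 = 0"
proof -
  assume "a < 4" "b < 4"
  then have "a = 0 \<or> a = 1 \<or> a = 2 \<or> a = 3" "b = 0 \<or> b = 1 \<or> b = 2 \<or> b = 3" by auto
  then show ?thesis by (elim disjE) simp_all
qed

lemma shift_mod:
  fixes a b k :: nat
  shows "(int ((a + k) mod 4) - int ((b + k) mod 4)) mod 4 = (int a - int b) mod 4"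
proof -
  have "(int ((a + k) mod 4) - int ((b + k) mod 4)) mod 4 = ((int a + int k) mod 4 - (int b + int k) mod 4) mod 4"
    by (simp add: zmod_int)
  also have "\<dots> = ((int a + int k) - (int b + int k)) mod 4"
    by (simp add: mod_diff_eq)
  also have "\<dots> = (int a - int b) mod 4" by simp
  finally show ?thesis .
qed

lemma RR_shift: "RR (\<lambda>v. (c v + k) mod 4) = RR c"
  unfolding RR_def using shift_mod by simp

theorem lemma1:
  fixes c :: "nat \<Rightarrow> nat"
  assumes "pq_coloring 4 1 Kminus_V Kminus_E c"
  shows "(c 1 = c 2 \<longrightarrow>
            acyclic (Dc_arcs 4 1 Kminus_E c) \<and>
            (1, 2) \<notin> (Dc_arcs 4 1 Kminus_E c)\<^sup>+ \<and> (2, 1) \<notin> (Dc_arcs 4 1 Kminus_E c)\<^sup>+)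
       \<and> ((int (c 1) - int (c 2)) mod 4 = 1 \<longrightarrow>
            acyclic (Dc_arcs 4 1 Kminus_E c) \<and> (1, 2) \<in> (Dc_arcs 4 1 Kminus_E c)\<^sup>+)
       \<and> ((int (c 1) - int (c 2)) mod 4 = 2 \<longrightarrow>
            \<not> acyclic (Dc_arcs 4 1 Kminus_E c))"
proof -
  have lt: "\<And>v. v \<in> {1,2,3,4} \<Longrightarrow> c v < 4"
    using assms unfolding pq_coloring_def Kminus_V_def by blast
  have ed: "\<And>x y. (x,y) \<in> set LL \<Longrightarrow> c x \<noteq> c y"
  proof
    fix x y assume "(x,y) \<in> set LL" "c x = c y"
    then have "{x,y} \<in> Kminus_E" using E_char2 by blast
    moreover have "\<forall>x y. {x, y} \<in> Kminus_E \<longrightarrow> int 1 \<le> \<bar>int (c x) - int (c y)\<bar> \<and> \<bar>int (c x) - int (c y)\<bar> \<le> int 4 - int 1"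
      using assms unfolding pq_coloring_def by blast
    ultimately have "int 1 \<le> \<bar>int (c x) - int (c y)\<bar>" by blast
    then show False using \<open>c x = c y\<close> by simp
  qed
  define k where "k = 4 - c 1"
  define c' where "c' = (\<lambda>v. (c v + k) mod 4)"
  have l1: "c 1 < 4" "c 2 < 4" "c 3 < 4" "c 4 < 4" using lt by auto
  have ne: "c 1 \<noteq> c 3" "c 1 \<noteq> c 4" "c 2 \<noteq> c 3" "c 2 \<noteq> c 4" "c 3 \<noteq> c 4"
    using ed[of 1 3] ed[of 1 4] ed[of 2 3] ed[of 2 4] ed[of 3 4] unfolding LL_def by simp_all
  have inj: "\<And>x y. c x < 4 \<Longrightarrow> c y < 4 \<Longrightarrow> c' x = c' y \<longleftrightarrow> c x = c y"
  proof -
    fix x y assume xy: "c x < 4" "c y < 4"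
    have lt': "c' x < 4" "c' y < 4" unfolding c'_def by simp_all
    have e1: "c' x = c' y \<longleftrightarrow> (int (c' x) - int (c' y)) mod 4 = 0"
      by (rule eq4[OF lt'])
    have e2: "(int (c' x) - int (c' y)) mod 4 = (int (c x) - int (c y)) mod 4"
      unfolding c'_def by (rule shift_mod)
    have e3: "c x = c y \<longleftrightarrow> (int (c x) - int (c y)) mod 4 = 0"
      by (rule eq4[OF xy])
    show "c' x = c' y \<longleftrightarrow> c x = c y" unfolding e1 e2 e3 ..
  qed
  have M: "(c' 1 = c' 2 \<longrightarrow>
            acyclic (RR c') \<and>
            (1, 2) \<notin> (RR c')\<^sup>+ \<and> (2, 1) \<notin> (RR c')\<^sup>+)
       \<and> ((int (c' 1) - int (c' 2)) mod 4 = 1 \<longrightarrow>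
            acyclic (RR c') \<and> (1, 2) \<in> (RR c')\<^sup>+)
       \<and> ((int (c' 1) - int (c' 2)) mod 4 = 2 \<longrightarrow>
            \<not> acyclic (RR c'))"
  proof (rule main0)
    show "c' 1 = 0" using l1 unfolding c'_def k_def by simp
    show "c' 2 < 4" "c' 3 < 4" "c' 4 < 4" unfolding c'_def by simp_all
    show "c' 1 \<noteq> c' 3" using ne(1) inj[OF l1(1) l1(3)] by blast
    show "c' 1 \<noteq> c' 4" using ne(2) inj[OF l1(1) l1(4)] by blast
    show "c' 2 \<noteq> c' 3" using ne(3) inj[OF l1(2) l1(3)] by blast
    show "c' 2 \<noteq> c' 4" using ne(4) inj[OF l1(2) l1(4)] by blast
    show "c' 3 \<noteq> c' 4" using ne(5) inj[OF l1(3) l1(4)] by blast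
  qed
  have R: "RR c' = RR c" unfolding c'_def by (rule RR_shift)
  have D: "(int (c' 1) - int (c' 2)) mod 4 = (int (c 1) - int (c 2)) mod 4"
    unfolding c'_def by (rule shift_mod)
  show ?thesis using M unfolding R D Dc_RR inj[OF l1(1) l1(2)] .
qed
end
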